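(* Let $n\in\mathbb{N}$. (1) If $n$ is odd and $n\geq 3$, then the path $P_n$ is an $\mathcal{N}$ position for Grim. (2) If $n$ is even and $n\geq 4$, then the cycle $C_n$ is a $\mathcal{P}$ position. (3) If $n$ is odd and $n\geq 5$, then the wheel $W_n$ is an $\mathcal{N}$ position. (4) For every non-empty finite simple graph $G$, the disjoint union $G\cup G$ of two copies of $G$ is a $\mathcal{P}$ position.
   Context: Grim is a two-player game on a finite simple undirected graph. Any isolated vertices of the starting graph are deleted before play begins. Players alternate moves; a move consists of selecting a vertex of the current graph and deleting it together with all its incident edges, after which every vertex that has become isolated is also deleted. The player who makes the last legal move wins (a player facing the empty graph has no move and loses). A graph is an $\mathcal{N}$ position if the player about to move has a winning strategy, and a $\mathcal{P}$ position otherwise. $P_n$, $C_n$ denote the path and cycle on $n$ vertices; $W_n$ denotes the wheel on $n$ vertices, i.e. the cycle $C_{n-1}$ together with one extra vertex (the center) adjacent to all vertices of the cycle. *)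

theory Defs
  imports Main
begin

text \<open>A Grim position is represented by its (finite) set of edges, each edge being a
  2-element vertex set. The vertices of the position are exactly the non-isolated
  vertices (the union of the edges), which matches the rule that isolated vertices are
  deleted.\<close>

definition grim_delete :: "'a \<Rightarrow> 'a set set \<Rightarrow> 'a set set" where
  "grim_delete v E = {e \<in> E. v \<notin> e}"

lemma grim_delete_card_less:
  assumes "finite E" "v \<in> \<Union>E"
  shows "card (grim_delete v E) < card E"
proof -
  from assms(2) obtain e where "e \<in> E" "v \<in> e" by blast
  hence "grim_delete v E \<subset> E" unfolding grim_delete_def by blast
  thus ?thesis using assms(1) by (simp add: psubset_card_mono)
qed

function grim_N :: "'a set set \<Rightarrow> bool" where
  "grim_N E = (if finite E then (\<exists>v\<in>\<Union>E. \<not> grim_N (grim_delete v E)) else False)"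
  by auto
termination
  by (relation "measure card") (auto intro: grim_delete_card_less)

declare grim_N.simps[simp del]

definition grim_P :: "'a set set \<Rightarrow> bool" where
  "grim_P E = (\<not> grim_N E)"

definition finite_simple_graph :: "'a set \<Rightarrow> 'a set set \<Rightarrow> bool" where
  "finite_simple_graph V E \<longleftrightarrow> finite V \<and> (\<forall>e\<in>E. e \<subseteq> V \<and> card e = 2)"

text \<open>Path P_n on vertices 0..n-1, cycle C_n on vertices 0..n-1 (n \<ge> 3),
  wheel W_n: cycle C_{n-1} on 0..n-2 and center n-1.\<close>
definition path_edges :: "nat \<Rightarrow> nat set set" where
  "path_edges n = {{i, Suc i} | i. Suc i < n}"

definition cycle_edges :: "nat \<Rightarrow> nat set set" where
  "cycle_edges n = {{i, (Suc i) mod n} | i. i < n}"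

definition wheel_edges :: "nat \<Rightarrow> nat set set" where
  "wheel_edges n = cycle_edges (n - 1) \<union> {{i, n - 1} | i. i < n - 1}"

definition double_edges :: "'a set set \<Rightarrow> ('a + 'a) set set" where
  "double_edges E = (\<lambda>e. Inl ` e) ` E \<union> (\<lambda>e. Inr ` e) ` E"

end

theory Submission
  imports Defs
begin

lemma grim_N_unfold: "finite E \<Longrightarrow> grim_N E = (\<exists>v\<in>\<Union>E. \<not> grim_N (grim_delete v E))"
  by (subst grim_N.simps) simp

lemma finite_delete: "finite E \<Longrightarrow> finite (grim_delete v E)"
  by (simp add: grim_delete_def)

lemma double_P: "finite E \<Longrightarrow> \<not> grim_N (double_edges E)"
proof (induction "card E" arbitrary: E rule: less_induct)
  case less
  have fin: "finite (double_edges E)" by (simp add: double_edges_def less.prems)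
  show ?case
  proof
    assume "grim_N (double_edges E)"
    then obtain w where w: "w \<in> \<Union>(double_edges E)" and nw: "\<not> grim_N (grim_delete w (double_edges E))"
      using fin grim_N_unfold by blast
    then obtain u where u: "u \<in> \<Union>E" and wu: "w = Inl u \<or> w = Inr u" by (auto simp: double_edges_def)
    have IH: "\<not> grim_N (double_edges (grim_delete u E))"
      by (rule less(1)[OF grim_delete_card_less[OF less.prems u] finite_delete[OF less.prems]])
    from wu show False
    proof
      assume [simp]: "w = Inl u"
      have f2: "finite (grim_delete w (double_edges E))" by (rule finite_delete[OF fin])
      have m: "Inr u \<in> \<Union>(grim_delete w (double_edges E))"
        using u by (auto simp: grim_delete_def double_edges_def)
      have eq: "grim_delete (Inr u) (grim_delete w (double_edges E)) = double_edges (grim_delete u E)"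
        by (auto simp: grim_delete_def double_edges_def)
      have "grim_N (grim_delete w (double_edges E))"
        apply (subst grim_N_unfold[OF f2])
        apply (rule bexI[of _ "Inr u"])
        using eq IH m by simp_all
      with nw show False by simp
    next
      assume [simp]: "w = Inr u"
      have f2: "finite (grim_delete w (double_edges E))" by (rule finite_delete[OF fin])
      have m: "Inl u \<in> \<Union>(grim_delete w (double_edges E))"
        using u by (auto simp: grim_delete_def double_edges_def)
      have eq: "grim_delete (Inl u) (grim_delete w (double_edges E)) = double_edges (grim_delete u E)"
        by (auto simp: grim_delete_def double_edges_def)
      have "grim_N (grim_delete w (double_edges E))"
        apply (subst grim_N_unfold[OF f2])
        apply (rule bexI[of _ "Inl u"])
        using eq IH m by simp_all
      with nw show False by simp
    qed
  qed
qed

lemma iso_delete: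
  assumes "inj_on f (\<Union>E)" "v \<in> \<Union>E"
  shows "grim_delete (f v) ((`) f ` E) = (`) f ` (grim_delete v E)"
proof -
  have "\<And>e. e \<in> E \<Longrightarrow> (f v \<in> f ` e) = (v \<in> e)"
    using assms by (meson Sup_upper inj_on_image_mem_iff)
  thus ?thesis unfolding grim_delete_def by auto
qed

lemma grim_N_iso: "finite E \<Longrightarrow> inj_on f (\<Union>E) \<Longrightarrow> grim_N ((`) f ` E) = grim_N E"
proof (induction "card E" arbitrary: E rule: less_induct)
  case less
  have fin: "finite ((`) f ` E)" using less.prems by simp
  have U: "\<Union>((`) f ` E) = f ` \<Union>E" by auto
  have step: "\<And>v. v \<in> \<Union>E \<Longrightarrow> grim_N (grim_delete (f v) ((`) f ` E)) = grim_N (grim_delete v E)"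
  proof -
    fix v assume v: "v \<in> \<Union>E"
    have "inj_on f (\<Union>(grim_delete v E))"
      using less.prems(2) by (rule inj_on_subset) (auto simp: grim_delete_def)
    hence "grim_N ((`) f ` grim_delete v E) = grim_N (grim_delete v E)"
      by (rule less(1)[OF grim_delete_card_less[OF less.prems(1) v] finite_delete[OF less.prems(1)]])
    thus "grim_N (grim_delete (f v) ((`) f ` E)) = grim_N (grim_delete v E)"
      using iso_delete[OF less.prems(2) v] by simp
  qed
  show ?case
    unfolding grim_N_unfold[OF fin] grim_N_unfold[OF less.prems(1)] U using step by auto
qed

lemma finite_path: "finite (path_edges n)"
proof -
  have "path_edges n = (\<lambda>i. {i, Suc i}) ` {i. Suc i < n}" by (auto simp: path_edges_def)
  moreover have "finite {i. Suc i < n}" by (rule finite_subset[of _ "{..<n}"]) auto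
  ultimately show ?thesis by simp
qed

lemma finite_cycle: "finite (cycle_edges n)"
proof -
  have "cycle_edges n = (\<lambda>i. {i, Suc i mod n}) ` {i. i < n}" by (auto simp: cycle_edges_def)
  thus ?thesis by simp
qed

lemma path_N:
  assumes "odd n" "n \<ge> 3"
  shows "grim_N (path_edges n)"
proof -
  define m where "m = n div 2"
  have n: "n = 2*m+1" using assms(1) unfolding m_def by presburger
  have m: "m \<ge> 1" using assms(2) n by linarith
  define f where "f = case_sum id (\<lambda>i::nat. m+1+i)"
  have inj: "inj_on f (\<Union>(double_edges (path_edges m)))"
  proof -
    have "\<Union>(double_edges (path_edges m)) \<subseteq> Inl ` {..<m} \<union> Inr ` UNIV"
      by (auto simp: double_edges_def path_edges_def)
    moreover have "inj_on f (Inl ` {..<m} \<union> Inr ` UNIV)"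
      by (rule inj_onI) (auto simp: f_def split: sum.splits)
    ultimately show ?thesis by (rule inj_on_subset[rotated])
  qed
  have eq: "grim_delete m (path_edges n) = (`) f ` double_edges (path_edges m)"
  proof (rule set_eqI, rule iffI)
    fix x assume "x \<in> grim_delete m (path_edges n)"
    then obtain i where x: "x = {i, Suc i}" "Suc i < n" "i \<noteq> m" "Suc i \<noteq> m"
      by (auto simp: grim_delete_def path_edges_def)
    show "x \<in> (`) f ` double_edges (path_edges m)"
    proof (cases "i < m")
      case True
      hence "{i, Suc i} \<in> path_edges m" using x by (auto simp: path_edges_def)
      hence "Inl ` {i, Suc i} \<in> double_edges (path_edges m)"
        unfolding double_edges_def by blast
      hence "{Inl i, Inl (Suc i)} \<in> double_edges (path_edges m)" by simp
      moreover have "f ` {Inl i, Inl (Suc i)} = x" using x by (simp add: f_def)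
      ultimately show ?thesis by blast
    next
      case False
      define j where "j = i - (m+1)"
      have ij: "i = m+1+j" using False x unfolding j_def by simp
      hence "{j, Suc j} \<in> path_edges m" using x n by (auto simp: path_edges_def)
      hence "Inr ` {j, Suc j} \<in> double_edges (path_edges m)"
        unfolding double_edges_def by blast
      hence "{Inr j, Inr (Suc j)} \<in> double_edges (path_edges m)" by simp
      moreover have "f ` {Inr j, Inr (Suc j)} = x" using x ij by (simp add: f_def)
      ultimately show ?thesis by blast
    qed
  next
    fix x assume "x \<in> (`) f ` double_edges (path_edges m)"
    then obtain i where "x = {i, Suc i} \<and> Suc i < m \<or> x = {m+1+i, Suc (m+1+i)} \<and> Suc i < m"
      unfolding double_edges_def path_edges_def f_def by auto blast+
    thus "x \<in> grim_delete m (path_edges n)"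
      using n by (auto simp: grim_delete_def path_edges_def)
  qed
  have fd: "finite (double_edges (path_edges m))" by (simp add: double_edges_def finite_path)
  have "\<not> grim_N (grim_delete m (path_edges n))"
    unfolding eq grim_N_iso[OF fd inj] using double_P finite_path by blast
  moreover have "{m, Suc m} \<in> path_edges n" using n m by (auto simp: path_edges_def)
  hence "m \<in> \<Union>(path_edges n)" by blast
  ultimately show ?thesis using grim_N_unfold[OF finite_path] by blast
qed


lemma cycle_vert: "v \<in> \<Union>(cycle_edges n) \<Longrightarrow> v < n"
  by (auto simp: cycle_edges_def)

lemma cycle_vert2: "v < n \<Longrightarrow> v \<in> \<Union>(cycle_edges n)"
proof -
  assume "v < n"
  hence "{v, Suc v mod n} \<in> cycle_edges n" by (auto simp: cycle_edges_def)
  thus ?thesis by blast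
qed

lemma cycle_rot:
  assumes "n > 0"
  shows "(`) (\<lambda>i. Suc i mod n) ` cycle_edges n = cycle_edges n"
proof (rule set_eqI, rule iffI)
  fix x assume "x \<in> (`) (\<lambda>i. Suc i mod n) ` cycle_edges n"
  then obtain i where "i < n" "x = (\<lambda>i. Suc i mod n) ` {i, Suc i mod n}"
    by (auto simp: cycle_edges_def)
  hence "x = {Suc i mod n, Suc (Suc i mod n) mod n}" by simp
  moreover have "Suc i mod n < n" using assms by simp
  ultimately show "x \<in> cycle_edges n" by (auto simp: cycle_edges_def)
next
  fix x assume "x \<in> cycle_edges n"
  then obtain j where j: "j < n" "x = {j, Suc j mod n}" by (auto simp: cycle_edges_def)
  show "x \<in> (`) (\<lambda>i. Suc i mod n) ` cycle_edges n"
  proof (cases j)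
    case 0
    have "{n - 1, Suc (n-1) mod n} \<in> cycle_edges n" using assms by (auto simp: cycle_edges_def)
    moreover have "(\<lambda>i. Suc i mod n) ` {n - 1, Suc (n-1) mod n} = x" using assms j 0 by auto
    ultimately show ?thesis by blast
  next
    case (Suc i)
    have "{i, Suc i mod n} \<in> cycle_edges n" using j Suc by (auto simp: cycle_edges_def)
    moreover have "(\<lambda>i. Suc i mod n) ` {i, Suc i mod n} = x" using j Suc by auto
    ultimately show ?thesis by blast
  qed
qed

lemma cycle_shift:
  assumes "Suc v < n"
  shows "grim_N (grim_delete (Suc v) (cycle_edges n)) = grim_N (grim_delete v (cycle_edges n))"
proof -
  let ?r = "\<lambda>i. Suc i mod n"
  have n: "n > 0" using assms by simp
  have inj: "inj_on ?r (\<Union>(cycle_edges n))"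
  proof -
    have "inj_on ?r {..<n}" by (rule inj_onI) (auto simp: mod_Suc split: if_splits)
    moreover have "\<Union>(cycle_edges n) \<subseteq> {..<n}" using cycle_vert by blast
    ultimately show ?thesis by (rule inj_on_subset)
  qed
  have v: "v \<in> \<Union>(cycle_edges n)" using assms cycle_vert2 by simp
  have inj2: "inj_on ?r (\<Union>(grim_delete v (cycle_edges n)))"
    using inj by (rule inj_on_subset) (auto simp: grim_delete_def)
  have "grim_N (grim_delete v (cycle_edges n)) = grim_N ((`) ?r ` grim_delete v (cycle_edges n))"
    using grim_N_iso[OF finite_delete[OF finite_cycle] inj2] by simp
  also have "\<dots> = grim_N (grim_delete (?r v) ((`) ?r ` cycle_edges n))"
    using iso_delete[OF inj v] by simp
  also have "\<dots> = grim_N (grim_delete (Suc v) (cycle_edges n))"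
    using cycle_rot[OF n] assms by simp
  finally show ?thesis by simp
qed

lemma cycle_all:
  "v < n \<Longrightarrow> grim_N (grim_delete v (cycle_edges n)) = grim_N (grim_delete 0 (cycle_edges n))"
proof (induction v)
  case 0
  show ?case by (rule refl)
next
  case (Suc v)
  have "v < n" using Suc.prems by simp
  thus ?case using Suc.IH cycle_shift[OF Suc.prems] by (rule_tac trans) simp_all
qed

lemma cycle_delete0:
  assumes "n \<ge> 3"
  shows "grim_delete 0 (cycle_edges n) = (`) Suc ` path_edges (n - 1)"
proof (rule set_eqI, rule iffI)
  fix x assume "x \<in> grim_delete 0 (cycle_edges n)"
  hence x: "x \<in> cycle_edges n" "0 \<notin> x" by (auto simp: grim_delete_def)
  from x(1) obtain j where j: "j < n" "x = {j, Suc j mod n}" by (auto simp: cycle_edges_def)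
  note j = j x(2)
  have "Suc j \<noteq> n" using j by auto
  hence sj: "Suc j < n" using j by simp
  then obtain i where i: "j = Suc i" using j by (cases j) auto
  have "{i, Suc i} \<in> path_edges (n-1)" using sj i by (auto simp: path_edges_def)
  moreover have "Suc ` {i, Suc i} = x" using j sj i by simp
  ultimately show "x \<in> (`) Suc ` path_edges (n - 1)" by blast
next
  fix x assume "x \<in> (`) Suc ` path_edges (n - 1)"
  then obtain i where i: "Suc i < n - 1" "x = {Suc i, Suc (Suc i)}" by (auto simp: path_edges_def)
  hence "x = {Suc i, Suc (Suc i) mod n}" by simp
  thus "x \<in> grim_delete 0 (cycle_edges n)" using i by (auto simp: grim_delete_def cycle_edges_def)
qed

lemma cycle_P:
  assumes "even n" "n \<ge> 4"
  shows "grim_P (cycle_edges n)"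
proof -
  have pn: "grim_N (path_edges (n-1))" using path_N[of "n-1"] assms by simp
  have "grim_N (grim_delete 0 (cycle_edges n))"
  proof -
    have "grim_N ((`) Suc ` path_edges (n - 1))"
      using grim_N_iso[OF finite_path, of Suc] pn by (simp add: inj_on_def)
    moreover have "n \<ge> 3" using assms by simp
    ultimately show ?thesis using cycle_delete0[of n] by simp
  qed
  hence "\<forall>v\<in>\<Union>(cycle_edges n). grim_N (grim_delete v (cycle_edges n))"
  proof (intro ballI)
    fix v assume "v \<in> \<Union>(cycle_edges n)"
    hence "v < n" by (rule cycle_vert)
    thus "grim_N (grim_delete v (cycle_edges n))" using cycle_all[of v n] \<open>grim_N (grim_delete 0 (cycle_edges n))\<close> by simp
  qed
  thus ?thesis unfolding grim_P_def using grim_N_unfold[OF finite_cycle] by blast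
qed

lemma wheel_N:
  assumes "odd n" "n \<ge> 5"
  shows "grim_N (wheel_edges n)"
proof -
  have fin: "finite (wheel_edges n)"
  proof -
    have "{{i, n - 1} | i. i < n - 1} = (\<lambda>i. {i, n-1}) ` {..<n-1}" by auto
    thus ?thesis by (simp add: wheel_edges_def finite_cycle)
  qed
  have d: "grim_delete (n-1) (wheel_edges n) = cycle_edges (n-1)"
    unfolding wheel_edges_def grim_delete_def using cycle_vert by blast
  have "{0, n-1} \<in> wheel_edges n" using assms unfolding wheel_edges_def by auto
  hence "n - 1 \<in> \<Union>(wheel_edges n)" by blast
  moreover have "\<not> grim_N (cycle_edges (n-1))" using cycle_P[of "n-1"] assms by (simp add: grim_P_def)
  ultimately show ?thesis using grim_N_unfold[OF fin] d by metis
qed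

theorem corollary4p4:
  shows "(\<forall>n::nat. odd n \<and> n \<ge> 3 \<longrightarrow> grim_N (path_edges n))
    \<and> (\<forall>n::nat. even n \<and> n \<ge> 4 \<longrightarrow> grim_P (cycle_edges n))
    \<and> (\<forall>n::nat. odd n \<and> n \<ge> 5 \<longrightarrow> grim_N (wheel_edges n))
    \<and> (\<forall>(V::'a set) E. finite_simple_graph V E \<and> V \<noteq> {} \<longrightarrow> grim_P (double_edges E))"
proof (intro conjI allI impI)
  fix V :: "'a set" and E
  assume "finite_simple_graph V E \<and> V \<noteq> {}"
  hence "E \<subseteq> Pow V" "finite V" by (auto simp: finite_simple_graph_def)
  hence "finite E" by (meson finite_Pow_iff finite_subset)
  thus "grim_P (double_edges E)" using double_P grim_P_def by blast
next
  fix n :: nat assume "odd n \<and> n \<ge> 3" thus "grim_N (path_edges n)" using path_N by blast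
next
  fix n :: nat assume "even n \<and> n \<ge> 4" thus "grim_P (cycle_edges n)" using cycle_P by blast
next
  fix n :: nat assume "odd n \<and> n \<ge> 5" thus "grim_N (wheel_edges n)" using wheel_N by blast
qed

end
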